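(* Let $\mathcal{G}$ be a finite graph with a join decomposition $\mathcal{G}=\mathcal{G}_1+\cdots+\mathcal{G}_k$. Then $$\mathfrak{K}_{\mathcal{G}}(x)=\prod_{j=1}^k\mathfrak{K}_{\mathcal{G}_j}(x|_{\mathcal{G}_j}),$$ and $$R(\mathcal{G})=R(\mathcal{G}_1)\times\cdots\times R(\mathcal{G}_k),$$ where for a graph $\mathcal{H}$ with vertex set $\mathcal{U}$, $R(\mathcal{H})=\{x\in[0,1]^{\mathcal{U}}:\mathfrak{K}_{\mathcal{H}'}(x|_{\mathcal{H}'})>0\text{ for every induced subgraph }\mathcal{H}'\subseteq\mathcal{H}\}$.
   Context: Graphs are finite, simple, undirected. A clique is a set of pairwise adjacent vertices (the empty set is a clique). An induced subgraph $\mathcal{H}'$ has vertex set $\mathcal{U}'\subseteq\mathcal{U}$ and all edges between vertices of $\mathcal{U}'$; $x|_{\mathcal{H}'}=(x_v)_{v\in\mathcal{U}'}$. $\mathfrak{K}_{\mathcal{H}}(x)=\sum_{\mathcal{K}\text{ clique}}(-1)^{|\mathcal{K}|}\prod_{v\in\mathcal{K}}x_v$, the empty clique contributing $1$. The graph join $\mathcal{G}_1+\cdots+\mathcal{G}_k$ has vertex set $\mathcal{V}_1\sqcup\cdots\sqcup\mathcal{V}_k$, two vertices being adjacent iff they are adjacent within the same $\mathcal{G}_i$ or lie in different $\mathcal{G}_i$'s. The identification $[0,1]^{\mathcal{V}}=\prod_j[0,1]^{\mathcal{V}_j}$ is used. *)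

theory Defs
  imports "HOL-Library.FuncSet" Complex_Main
begin

definition simple_graph :: "'a set \<Rightarrow> ('a \<Rightarrow> 'a \<Rightarrow> bool) \<Rightarrow> bool" where
  "simple_graph V E \<longleftrightarrow> finite V \<and> (\<forall>u\<in>V. \<forall>v\<in>V. E u v \<longrightarrow> E v u) \<and> (\<forall>v\<in>V. \<not> E v v)"

definition is_clique :: "('a \<Rightarrow> 'a \<Rightarrow> bool) \<Rightarrow> 'a set \<Rightarrow> bool" where
  "is_clique E K \<longleftrightarrow> (\<forall>u\<in>K. \<forall>v\<in>K. u \<noteq> v \<longrightarrow> E u v)"

text \<open>Clique polynomial of the graph (V,E) evaluated at x (only x on V matters,
 so this is K_H(x restricted to H)).\<close>
definition clique_poly :: "'a set \<Rightarrow> ('a \<Rightarrow> 'a \<Rightarrow> bool) \<Rightarrow> ('a \<Rightarrow> real) \<Rightarrow> real" where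
  "clique_poly V E x = (\<Sum>K\<in>{K. K \<subseteq> V \<and> is_clique E K}. (-1) ^ card K * (\<Prod>v\<in>K. x v))"

definition Rset :: "'a set \<Rightarrow> ('a \<Rightarrow> 'a \<Rightarrow> bool) \<Rightarrow> ('a \<Rightarrow> real) set" where
  "Rset V E = {x \<in> (\<Pi>\<^sub>E v\<in>V. {0..1}). \<forall>U. U \<subseteq> V \<longrightarrow> clique_poly U E x > 0}"

definition is_graph_join :: "'a set \<Rightarrow> ('a \<Rightarrow> 'a \<Rightarrow> bool) \<Rightarrow> nat \<Rightarrow> (nat \<Rightarrow> 'a set)
      \<Rightarrow> (nat \<Rightarrow> 'a \<Rightarrow> 'a \<Rightarrow> bool) \<Rightarrow> bool" where
  "is_graph_join V E k Vs Es \<longleftrightarrow>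
     V = (\<Union>j<k. Vs j) \<and>
     (\<forall>i<k. \<forall>j<k. i \<noteq> j \<longrightarrow> Vs i \<inter> Vs j = {}) \<and>
     (\<forall>u\<in>V. \<forall>v\<in>V. E u v \<longleftrightarrow>
        ((\<exists>j<k. u \<in> Vs j \<and> v \<in> Vs j \<and> Es j u v) \<or>
         (\<exists>i<k. \<exists>j<k. i \<noteq> j \<and> u \<in> Vs i \<and> v \<in> Vs j)))"

end

theory Submission
  imports Defs
begin

lemma clique_poly_cong:
  assumes "\<forall>u\<in>A. \<forall>v\<in>A. u \<noteq> v \<longrightarrow> (E u v \<longleftrightarrow> E' u v)"
  shows "clique_poly A E x = clique_poly A E' x"
proof -
  have "{K. K \<subseteq> A \<and> is_clique E K} = {K. K \<subseteq> A \<and> is_clique E' K}"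
    using assms unfolding is_clique_def by blast
  then show ?thesis unfolding clique_poly_def by simp
qed

lemma clique_poly_empty: "clique_poly {} E x = 1"
proof -
  have "{K. K \<subseteq> {} \<and> is_clique E K} = {{}}" by (auto simp: is_clique_def)
  then show ?thesis unfolding clique_poly_def by simp
qed

lemma clique_poly_union:
  assumes fA: "finite A" and fB: "finite B" and dis: "A \<inter> B = {}"
    and cross: "\<forall>u\<in>A. \<forall>v\<in>B. E u v \<and> E v u"
  shows "clique_poly (A \<union> B) E x = clique_poly A E x * clique_poly B E x"
proof -
  define C where "C = (\<lambda>S. {K. K \<subseteq> S \<and> is_clique E K})"
  define f where "f = (\<lambda>K::'a set. (-1::real) ^ card K * (\<Prod>v\<in>K. x v))"
  have bij: "bij_betw (\<lambda>(K1,K2). K1 \<union> K2) (C A \<times> C B) (C (A \<union> B))"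
  proof -
    have "inj_on (\<lambda>(K1,K2). K1 \<union> K2) (C A \<times> C B)"
    proof (rule inj_onI)
      fix p q assume "p \<in> C A \<times> C B" "q \<in> C A \<times> C B"
        and eq: "(case p of (K1,K2) \<Rightarrow> K1 \<union> K2) = (case q of (K1,K2) \<Rightarrow> K1 \<union> K2)"
      obtain K1 K2 L1 L2 where pq: "p = (K1,K2)" "q = (L1,L2)" by (cases p, cases q) auto
      from eq pq \<open>p \<in> _\<close> \<open>q \<in> _\<close> have "K1 \<subseteq> A" "K2 \<subseteq> B" "L1 \<subseteq> A" "L2 \<subseteq> B" "K1 \<union> K2 = L1 \<union> L2"
        by (auto simp: C_def)
      then show "p = q" using dis pq by blast
    qed
    moreover have "(\<lambda>(K1,K2). K1 \<union> K2) ` (C A \<times> C B) = C (A \<union> B)"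
    proof
      show "(\<lambda>(K1,K2). K1 \<union> K2) ` (C A \<times> C B) \<subseteq> C (A \<union> B)"
        using cross unfolding C_def is_clique_def by blast
    next
      show "C (A \<union> B) \<subseteq> (\<lambda>(K1,K2). K1 \<union> K2) ` (C A \<times> C B)"
      proof
        fix K assume K: "K \<in> C (A \<union> B)"
        then have "(K \<inter> A, K \<inter> B) \<in> C A \<times> C B"
          unfolding C_def is_clique_def by blast
        moreover have "K = (\<lambda>(K1,K2). K1 \<union> K2) (K \<inter> A, K \<inter> B)"
          using K unfolding C_def by auto
        ultimately show "K \<in> (\<lambda>(K1,K2). K1 \<union> K2) ` (C A \<times> C B)" by blast
      qed
    qed
    ultimately show ?thesis unfolding bij_betw_def by blast
  qed
  have "clique_poly (A \<union> B) E x = sum f (C (A \<union> B))"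
    unfolding clique_poly_def C_def f_def by simp
  also have "\<dots> = sum (f \<circ> (\<lambda>(K1,K2). K1 \<union> K2)) (C A \<times> C B)"
    using sum.reindex_bij_betw[OF bij, of f] by simp
  also have "\<dots> = sum (\<lambda>(K1,K2). f K1 * f K2) (C A \<times> C B)"
  proof (rule sum.cong, simp)
    fix p assume p: "p \<in> C A \<times> C B"
    obtain K1 K2 where pK: "p = (K1,K2)" by (cases p) auto
    from p pK have s: "K1 \<subseteq> A" "K2 \<subseteq> B" by (auto simp: C_def)
    then have fin: "finite K1" "finite K2" using fA fB finite_subset by auto
    have d: "K1 \<inter> K2 = {}" using s dis by blast
    show "(f \<circ> (\<lambda>(K1,K2). K1 \<union> K2)) p = (case p of (K1,K2) \<Rightarrow> f K1 * f K2)"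
      unfolding f_def using fin d pK
      by (simp add: card_Un_disjoint prod.union_disjoint power_add)
  qed
  also have "\<dots> = sum f (C A) * sum f (C B)"
    by (simp add: sum_product sum.cartesian_product)
  also have "\<dots> = clique_poly A E x * clique_poly B E x"
    unfolding clique_poly_def C_def f_def by simp
  finally show ?thesis .
qed

lemma clique_poly_join_gen:
  fixes k :: nat and Vs :: "nat \<Rightarrow> 'a set"
  assumes "\<forall>j<k. finite (Vs j)"
    and "\<forall>i<k. \<forall>j<k. i \<noteq> j \<longrightarrow> Vs i \<inter> Vs j = {}"
    and "\<forall>i<k. \<forall>j<k. i \<noteq> j \<longrightarrow> (\<forall>u\<in>Vs i. \<forall>v\<in>Vs j. E u v)"
  shows "clique_poly (\<Union>j<k. Vs j) E x = (\<Prod>j<k. clique_poly (Vs j) E x)"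
  using assms
proof (induction k)
  case 0
  then show ?case by (simp add: clique_poly_empty)
next
  case (Suc k)
  have IH: "clique_poly (\<Union>j<k. Vs j) E x = (\<Prod>j<k. clique_poly (Vs j) E x)"
    using Suc.prems by (intro Suc.IH) (meson less_SucI)+
  have U: "(\<Union>j<Suc k. Vs j) = (\<Union>j<k. Vs j) \<union> Vs k"
    by (auto simp: lessThan_Suc)
  have "clique_poly ((\<Union>j<k. Vs j) \<union> Vs k) E x = clique_poly (\<Union>j<k. Vs j) E x * clique_poly (Vs k) E x"
  proof (rule clique_poly_union)
    show "finite (\<Union>j<k. Vs j)" using Suc.prems by auto
    show "finite (Vs k)" using Suc.prems by auto
    show "(\<Union>j<k. Vs j) \<inter> Vs k = {}"
    proof -
      have "Vs j \<inter> Vs k = {}" if "j < k" for j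
        using Suc.prems(2) that by (metis less_SucI lessI less_irrefl)
      then show ?thesis by blast
    qed
    show "\<forall>u\<in>(\<Union>j<k. Vs j). \<forall>v\<in>Vs k. E u v \<and> E v u"
    proof (intro ballI)
      fix u v assume "u \<in> (\<Union>j<k. Vs j)" "v \<in> Vs k"
      then obtain j where "j < k" "u \<in> Vs j" by auto
      then show "E u v \<and> E v u" using Suc.prems(3) \<open>v \<in> Vs k\<close>
        by (metis less_SucI lessI nat_neq_iff)
    qed
  qed
  then show ?case using IH U by simp
qed

lemma join_sub:
  assumes J: "is_graph_join V E k Vs Es" and UV: "U \<subseteq> V" and fV: "finite V"
  shows "clique_poly U E x = (\<Prod>j<k. clique_poly (U \<inter> Vs j) (Es j) x)"
proof -
  have V: "V = (\<Union>j<k. Vs j)" and dis: "\<forall>i<k. \<forall>j<k. i \<noteq> j \<longrightarrow> Vs i \<inter> Vs j = {}"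
    and Ed: "\<forall>u\<in>V. \<forall>v\<in>V. E u v \<longleftrightarrow>
        ((\<exists>j<k. u \<in> Vs j \<and> v \<in> Vs j \<and> Es j u v) \<or>
         (\<exists>i<k. \<exists>j<k. i \<noteq> j \<and> u \<in> Vs i \<and> v \<in> Vs j))"
    using J unfolding is_graph_join_def by auto
  have U: "U = (\<Union>j<k. U \<inter> Vs j)" using UV V by auto
  have "clique_poly (\<Union>j<k. U \<inter> Vs j) E x = (\<Prod>j<k. clique_poly (U \<inter> Vs j) E x)"
  proof (rule clique_poly_join_gen)
    show "\<forall>j<k. finite (U \<inter> Vs j)" using fV UV finite_subset by blast
    show "\<forall>i<k. \<forall>j<k. i \<noteq> j \<longrightarrow> (U \<inter> Vs i) \<inter> (U \<inter> Vs j) = {}" using dis by blast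
    show "\<forall>i<k. \<forall>j<k. i \<noteq> j \<longrightarrow> (\<forall>u\<in>U \<inter> Vs i. \<forall>v\<in>U \<inter> Vs j. E u v)"
      using Ed V by blast
  qed
  also have "\<dots> = (\<Prod>j<k. clique_poly (U \<inter> Vs j) (Es j) x)"
  proof (rule prod.cong, simp)
    fix j assume "j \<in> {..<k}"
    then have j: "j < k" by simp
    show "clique_poly (U \<inter> Vs j) E x = clique_poly (U \<inter> Vs j) (Es j) x"
    proof (rule clique_poly_cong, intro ballI impI)
      fix u v assume u: "u \<in> U \<inter> Vs j" and v: "v \<in> U \<inter> Vs j" and "u \<noteq> v"
      have uV: "u \<in> V" "v \<in> V" using u v V j by auto
      have "\<not> (\<exists>i<k. \<exists>j'<k. i \<noteq> j' \<and> u \<in> Vs i \<and> v \<in> Vs j')"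
      proof
        assume "\<exists>i<k. \<exists>j'<k. i \<noteq> j' \<and> u \<in> Vs i \<and> v \<in> Vs j'"
        then obtain i j' where "i<k" "j'<k" "i \<noteq> j'" "u \<in> Vs i" "v \<in> Vs j'" by blast
        then show False using dis u v j by blast
      qed
      moreover have "(\<exists>j'<k. u \<in> Vs j' \<and> v \<in> Vs j' \<and> Es j' u v) \<longleftrightarrow> Es j u v"
        using dis u v j by blast
      ultimately show "E u v \<longleftrightarrow> Es j u v" using Ed uV by blast
    qed
  qed
  finally show ?thesis using U by simp
qed

theorem lemma4p7:
  fixes V :: "'a set" and E :: "'a \<Rightarrow> 'a \<Rightarrow> bool" and k :: nat
    and Vs :: "nat \<Rightarrow> 'a set" and Es :: "nat \<Rightarrow> 'a \<Rightarrow> 'a \<Rightarrow> bool"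
  assumes "simple_graph V E"
    and "\<And>j. j < k \<Longrightarrow> simple_graph (Vs j) (Es j)"
    and "is_graph_join V E k Vs Es"
  shows "(\<forall>x. clique_poly V E x = (\<Prod>j<k. clique_poly (Vs j) (Es j) x)) \<and>
         (Rset V E = {x \<in> extensional V. \<forall>j<k. restrict x (Vs j) \<in> Rset (Vs j) (Es j)})"
proof -
  have fV: "finite V" using assms(1) unfolding simple_graph_def by simp
  have V: "V = (\<Union>j<k. Vs j)" using assms(3) unfolding is_graph_join_def by simp
  have sub: "\<And>j. j < k \<Longrightarrow> Vs j \<subseteq> V" using V by auto
  have restr: "\<And>U E' x A. U \<subseteq> A \<Longrightarrow> clique_poly U E' (restrict x A) = clique_poly U E' x"
    unfolding clique_poly_def
    by (intro sum.cong refl arg_cong2[where f="(*)"] prod.cong) (auto simp: subset_iff)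
  have P1: "\<forall>x. clique_poly V E x = (\<Prod>j<k. clique_poly (Vs j) (Es j) x)"
  proof
    fix x
    have "clique_poly V E x = (\<Prod>j<k. clique_poly (V \<inter> Vs j) (Es j) x)"
      using join_sub[OF assms(3) order_refl fV] .
    also have "\<dots> = (\<Prod>j<k. clique_poly (Vs j) (Es j) x)"
      using sub by (intro prod.cong refl) (simp add: Int_absorb1)
    finally show "clique_poly V E x = (\<Prod>j<k. clique_poly (Vs j) (Es j) x)" .
  qed
  have P2: "Rset V E = {x \<in> extensional V. \<forall>j<k. restrict x (Vs j) \<in> Rset (Vs j) (Es j)}"
  proof
    show "Rset V E \<subseteq> {x \<in> extensional V. \<forall>j<k. restrict x (Vs j) \<in> Rset (Vs j) (Es j)}"
    proof
      fix x assume x: "x \<in> Rset V E"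
      then have xP: "x \<in> (\<Pi>\<^sub>E v\<in>V. {0..1})" and pos: "\<forall>U. U \<subseteq> V \<longrightarrow> clique_poly U E x > 0"
        unfolding Rset_def by auto
      have "restrict x (Vs j) \<in> Rset (Vs j) (Es j)" if j: "j < k" for j
        unfolding Rset_def
      proof (intro CollectI conjI allI impI)
        show "restrict x (Vs j) \<in> (\<Pi>\<^sub>E v\<in>Vs j. {0..1})" using xP sub[OF j] by auto
        fix U assume U: "U \<subseteq> Vs j"
        have "clique_poly U E x = (\<Prod>i<k. clique_poly (U \<inter> Vs i) (Es i) x)"
          using join_sub[OF assms(3) _ fV] U sub[OF j] by blast
        also have "\<dots> = clique_poly U (Es j) x"
        proof -
          have "(\<Prod>i<k. clique_poly (U \<inter> Vs i) (Es i) x) = (\<Prod>i\<in>{..<k}. if i = j then clique_poly U (Es j) x else 1)"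
          proof (rule prod.cong, simp)
            fix i assume "i \<in> {..<k}"
            show "clique_poly (U \<inter> Vs i) (Es i) x = (if i = j then clique_poly U (Es j) x else 1)"
            proof (cases "i = j")
              case True then show ?thesis using U by (simp add: Int_absorb2)
            next
              case False
              then have "U \<inter> Vs i = {}" using U assms(3) j \<open>i \<in> {..<k}\<close>
                unfolding is_graph_join_def by blast
              then show ?thesis using False by (simp add: clique_poly_empty)
            qed
          qed
          also have "\<dots> = clique_poly U (Es j) x" using j by (simp add: prod.delta)
          finally show ?thesis .
        qed
        finally have "clique_poly U E x = clique_poly U (Es j) x" .
        then show "clique_poly U (Es j) (restrict x (Vs j)) > 0"
          using pos U sub[OF j] restr[OF U] by (metis order_trans)
      qed
      then show "x \<in> {x \<in> extensional V. \<forall>j<k. restrict x (Vs j) \<in> Rset (Vs j) (Es j)}"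
        using xP by (auto simp: PiE_def)
    qed
  next
    show "{x \<in> extensional V. \<forall>j<k. restrict x (Vs j) \<in> Rset (Vs j) (Es j)} \<subseteq> Rset V E"
    proof
      fix x assume "x \<in> {x \<in> extensional V. \<forall>j<k. restrict x (Vs j) \<in> Rset (Vs j) (Es j)}"
      then have ext: "x \<in> extensional V" and R: "\<And>j. j < k \<Longrightarrow> restrict x (Vs j) \<in> Rset (Vs j) (Es j)"
        by auto
      have xP: "x \<in> (\<Pi>\<^sub>E v\<in>V. {0..1})"
      proof -
        have "x v \<in> {0..1}" if "v \<in> V" for v
        proof -
          obtain j where j: "j < k" "v \<in> Vs j" using V \<open>v \<in> V\<close> by auto
          have "restrict x (Vs j) \<in> (\<Pi>\<^sub>E v\<in>Vs j. {0..1})" using R[OF j(1)] unfolding Rset_def by auto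
          then show ?thesis using j(2) by auto
        qed
        then show ?thesis using ext by (auto simp: PiE_def)
      qed
      have "clique_poly U E x > 0" if U: "U \<subseteq> V" for U
      proof -
        have "clique_poly U E x = (\<Prod>j<k. clique_poly (U \<inter> Vs j) (Es j) x)"
          using join_sub[OF assms(3) U fV] .
        also have "\<dots> > 0"
        proof (rule prod_pos)
          fix j assume "j \<in> {..<k}"
          then have j: "j < k" by simp
          have "clique_poly (U \<inter> Vs j) (Es j) (restrict x (Vs j)) > 0"
            using R[OF j] unfolding Rset_def by auto
          then show "clique_poly (U \<inter> Vs j) (Es j) x > 0" using restr[of "U \<inter> Vs j" "Vs j"] by simp
        qed
        finally show ?thesis .
      qed
      then show "x \<in> Rset V E" using xP unfolding Rset_def by auto
    qed
  qed
  show ?thesis using P1 P2 by blast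
qed

end
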